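(* Let $u_1(t_1,t_2)$ and $u_2(t_1,t_2)$ be two left normed commutators in the free variables $t_1,t_2$, each of degree at least two. Then $u_1(C_1,C_2)u_2(C_1,C_2)$ is strongly central in $F$.
   Context: $K$ is an infinite field of characteristic different from 2. Let $X=\{x_1,x_2,x_1',x_2'\}$ and $Y=\{y_1,y_2,y_1',y_2'\}$, and let $K[X;Y]\cong K[X]\otimes_K E(Y)$ be the free supercommutative algebra: the $x$'s are even commuting variables, the $y$'s are odd pairwise anticommuting variables, and $E(Y)$ is the Grassmann algebra on the vector space with basis $Y$. Put $C_1=\begin{pmatrix} x_1&y_1\\ y_1'&x_1'\end{pmatrix}$, $C_2=\begin{pmatrix} x_2&y_2\\ y_2'&x_2'\end{pmatrix}$, and let $F=K[C_1,C_2]$ be the unital $K$-subalgebra of $M_2(K[X;Y])$ generated by $C_1,C_2$. Commutators are $[a,b]=ab-ba$, left normed: $[a_1,\ldots,a_k]=[[a_1,\ldots,a_{k-1}],a_k]$. An element $a\in F$ is strongly central if $a$ is central in $F$ and $ab$ is central in $F$ for every $b\in F$. *)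

theory Defs
  imports Main "HOL-Library.Poly_Mapping"
begin

text \<open>Even variables x1,x2,x1',x2' are indexed by 0,1,2,3; odd variables
y1,y2,y1',y2' are indexed by 0,1,2,3 (ordered in this way for the Grassmann sign).
A supermonomial is a pair (m, S): m an exponent vector (finitely supported) of
the even variables, S the set of odd variables occurring (in increasing order).\<close>

type_synonym smono = "(nat \<Rightarrow>\<^sub>0 nat) \<times> nat set"
type_synonym 'k sc = "smono \<Rightarrow> 'k"

definition gsign :: "nat set \<Rightarrow> nat set \<Rightarrow> 'k::comm_ring_1" where
  "gsign T U = (- 1) ^ card {(t, u). t \<in> T \<and> u \<in> U \<and> u < t}"

definition sc_zero :: "'k::comm_ring_1 sc" where
  "sc_zero = (\<lambda>_. 0)"

definition sc_one :: "'k::comm_ring_1 sc" where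
  "sc_one = (\<lambda>(m, S). if m = 0 \<and> S = {} then 1 else 0)"

definition sc_add :: "'k::comm_ring_1 sc \<Rightarrow> 'k sc \<Rightarrow> 'k sc" where
  "sc_add f g = (\<lambda>z. f z + g z)"

definition sc_scal :: "'k::comm_ring_1 \<Rightarrow> 'k sc \<Rightarrow> 'k sc" where
  "sc_scal c f = (\<lambda>z. c * f z)"

definition sc_mult :: "'k::comm_ring_1 sc \<Rightarrow> 'k sc \<Rightarrow> 'k sc" where
  "sc_mult f g = (\<lambda>(m, S).
     \<Sum>((a, T), (b, U)) \<in> {((a, T), (b, U)). a + b = m \<and> T \<union> U = S \<and> T \<inter> U = {}}.
        gsign T U * f (a, T) * g (b, U))"

definition xv :: "nat \<Rightarrow> 'k::comm_ring_1 sc" where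
  "xv i = (\<lambda>(m, S). if m = Poly_Mapping.single i 1 \<and> S = {} then 1 else 0)"

definition yv :: "nat \<Rightarrow> 'k::comm_ring_1 sc" where
  "yv j = (\<lambda>(m, S). if m = 0 \<and> S = {j} then 1 else 0)"

text \<open>Index False = row/column 1, True = row/column 2.\<close>

type_synonym 'k mat2 = "bool \<Rightarrow> bool \<Rightarrow> 'k sc"

definition mk2 :: "'k sc \<Rightarrow> 'k sc \<Rightarrow> 'k sc \<Rightarrow> 'k sc \<Rightarrow> 'k mat2" where
  "mk2 a b c d = (\<lambda>i j. if \<not> i then (if \<not> j then a else b) else (if \<not> j then c else d))"

definition madd :: "'k::comm_ring_1 mat2 \<Rightarrow> 'k mat2 \<Rightarrow> 'k mat2" where
  "madd A B = (\<lambda>i j. sc_add (A i j) (B i j))"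

definition mscal :: "'k::comm_ring_1 \<Rightarrow> 'k mat2 \<Rightarrow> 'k mat2" where
  "mscal c A = (\<lambda>i j. sc_scal c (A i j))"

definition mmul :: "'k::comm_ring_1 mat2 \<Rightarrow> 'k mat2 \<Rightarrow> 'k mat2" where
  "mmul A B = (\<lambda>i j. sc_add (sc_mult (A i False) (B False j)) (sc_mult (A i True) (B True j)))"

definition mone :: "'k::comm_ring_1 mat2" where
  "mone = (\<lambda>i j. if i = j then sc_one else sc_zero)"

definition C1 :: "'k::comm_ring_1 mat2" where
  "C1 = mk2 (xv 0) (yv 0) (yv 2) (xv 2)"

definition C2 :: "'k::comm_ring_1 mat2" where
  "C2 = mk2 (xv 1) (yv 1) (yv 3) (xv 3)"

inductive_set genF :: "'k::comm_ring_1 mat2 set" where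
  one: "mone \<in> genF"
| c1: "C1 \<in> genF"
| c2: "C2 \<in> genF"
| add: "A \<in> genF \<Longrightarrow> B \<in> genF \<Longrightarrow> madd A B \<in> genF"
| mul: "A \<in> genF \<Longrightarrow> B \<in> genF \<Longrightarrow> mmul A B \<in> genF"
| scal: "A \<in> genF \<Longrightarrow> mscal c A \<in> genF"

definition mcomm :: "'k::comm_ring_1 mat2 \<Rightarrow> 'k mat2 \<Rightarrow> 'k mat2" where
  "mcomm A B = madd (mmul A B) (mscal (- 1) (mmul B A))"

text \<open>A left normed commutator [t_{i_1}, ..., t_{i_k}] in the free variables t1, t2
is given by the list of indices [i_1,...,i_k] (False = t1, True = t2); its degree is k.
Evaluation at t1 := C1, t2 := C2:\<close>

definition genC :: "bool \<Rightarrow> 'k::comm_ring_1 mat2" where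
  "genC b = (if b then C2 else C1)"

fun lncomm :: "bool list \<Rightarrow> 'k::comm_ring_1 mat2" where
  "lncomm [] = mone"
| "lncomm (i # is) = foldl (\<lambda>acc j. mcomm acc (genC j)) (genC i) is"

definition central_in_F :: "'k::comm_ring_1 mat2 \<Rightarrow> bool" where
  "central_in_F a \<longleftrightarrow> a \<in> genF \<and> (\<forall>b \<in> genF. mmul a b = mmul b a)"

definition strongly_central :: "'k::comm_ring_1 mat2 \<Rightarrow> bool" where
  "strongly_central a \<longleftrightarrow> central_in_F a \<and> (\<forall>b \<in> genF. central_in_F (mmul a b))"

end

theory Submission
  imports Defs
begin


lemma finite_split:
  fixes m :: "nat \<Rightarrow>\<^sub>0 nat"
  shows "finite {(a, b). a + b = m}"
proof -
  define M where "M = (sum (Poly_Mapping.lookup m) (Poly_Mapping.keys m) :: nat)"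
  have fin: "finite {f. \<forall>x::nat. (x \<in> Poly_Mapping.keys m \<longrightarrow> f x \<in> {..M}) \<and> (x \<notin> Poly_Mapping.keys m \<longrightarrow> f x = (0::nat))}"
    by (rule finite_set_of_finite_funs) auto
  have A: "finite {a. \<exists>b. a + b = m}"
  proof (rule finite_imageD[where f = Poly_Mapping.lookup])
    show "finite (Poly_Mapping.lookup ` {a. \<exists>b. a + b = m})"
    proof (rule finite_subset[OF _ fin])
      show "Poly_Mapping.lookup ` {a. \<exists>b. a + b = m} \<subseteq> {f. \<forall>x::nat. (x \<in> Poly_Mapping.keys m \<longrightarrow> f x \<in> {..M}) \<and> (x \<notin> Poly_Mapping.keys m \<longrightarrow> f x = (0::nat))}"
      proof (rule subsetI)
        fix f assume "f \<in> Poly_Mapping.lookup ` {a. \<exists>b. a + b = m}"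
        then obtain a b where f: "f = Poly_Mapping.lookup a" and m: "a + b = m" by auto
        show "f \<in> {f. \<forall>x::nat. (x \<in> Poly_Mapping.keys m \<longrightarrow> f x \<in> {..M}) \<and> (x \<notin> Poly_Mapping.keys m \<longrightarrow> f x = (0::nat))}"
          unfolding mem_Collect_eq
        proof (intro allI conjI impI)
          fix x
          have le: "Poly_Mapping.lookup a x \<le> Poly_Mapping.lookup m x" by (simp add: m[symmetric] Poly_Mapping.lookup_add)
          {
            assume "x \<in> Poly_Mapping.keys m"
            then have "Poly_Mapping.lookup m x \<le> M" unfolding M_def by (intro member_le_sum) auto
            then show "f x \<in> {..M}" using le f by simp
          next
            assume "x \<notin> Poly_Mapping.keys m"
            then show "f x = 0" using le f by (simp add: Poly_Mapping.in_keys_iff)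
          }
        qed
      qed
    qed
    show "inj_on Poly_Mapping.lookup {a. \<exists>b. a + b = m}"
      by (meson injI inj_on_subset poly_mapping.lookup_inject subset_UNIV)
  qed
  have "{(a, b). a + b = m} \<subseteq> (\<lambda>a. (a, m - a)) ` {a. \<exists>b. a + b = m}"
  proof (rule subsetI)
    fix z assume "z \<in> {(a, b). a + b = m}"
    then obtain a b where z: "z = (a, b)" and m: "a + b = m" by auto
    then show "z \<in> (\<lambda>a. (a, m - a)) ` {a. \<exists>b. a + b = m}"
      by (auto intro!: image_eqI[where x = a])
  qed
  then show ?thesis using A by (meson finite_imageI finite_subset)
qed

definition Dset :: "(nat \<Rightarrow>\<^sub>0 nat) \<Rightarrow> nat set \<Rightarrow> (smono \<times> smono) set" where
  "Dset m S = {((a, T), (b, U)). a + b = m \<and> T \<union> U = S \<and> T \<inter> U = {}}"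

lemma finite_Dset: "finite S \<Longrightarrow> finite (Dset m S)"
proof -
  assume S: "finite S"
  have "Dset m S \<subseteq> (\<lambda>((a, b), (T, U)). ((a, T), (b, U))) ` ({(a, b). a + b = m} \<times> (Pow S \<times> Pow S))"
  proof
    fix z assume "z \<in> Dset m S"
    then obtain a T b U where z: "z = ((a, T), (b, U))" "a + b = m" "T \<union> U = S" "T \<inter> U = {}"
      unfolding Dset_def by auto
    show "z \<in> (\<lambda>((a, b), (T, U)). ((a, T), (b, U))) ` ({(a, b). a + b = m} \<times> (Pow S \<times> Pow S))"
      by (rule image_eqI[where x = "((a, b), (T, U))"]) (use z in auto)
  qed
  then show ?thesis
    by (rule finite_subset) (intro finite_imageI finite_cartesian_product finite_split, use S in auto)
qed

lemma sc_mult_eq: "sc_mult f g (m, S) = (\<Sum>((a, T), (b, U)) \<in> Dset m S. gsign T U * f (a, T) * g (b, U))"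
  unfolding sc_mult_def Dset_def by simp

lemma gsign_Un_left:
  assumes "finite A" "finite B" "finite C" "A \<inter> B = {}"
  shows "(gsign (A \<union> B) C :: 'k::comm_ring_1) = gsign A C * gsign B C"
proof -
  let ?X = "\<lambda>T. {(t, u). t \<in> T \<and> u \<in> C \<and> u < t}"
  have "?X (A \<union> B) = ?X A \<union> ?X B" by auto
  moreover have "?X A \<inter> ?X B = {}" using assms(4) by auto
  moreover have "finite (?X T)" if "finite T" for T
    by (rule finite_subset[of _ "T \<times> C"]) (use that assms in auto)
  ultimately have "card (?X (A \<union> B)) = card (?X A) + card (?X B)"
    using assms by (simp add: card_Un_disjoint)
  then show ?thesis unfolding gsign_def by (simp add: power_add)
qed

lemma gsign_Un_right:
  assumes "finite A" "finite B" "finite C" "B \<inter> C = {}"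
  shows "(gsign A (B \<union> C) :: 'k::comm_ring_1) = gsign A B * gsign A C"
proof -
  let ?X = "\<lambda>U. {(t, u). t \<in> A \<and> u \<in> U \<and> u < t}"
  have "?X (B \<union> C) = ?X B \<union> ?X C" by auto
  moreover have "?X B \<inter> ?X C = {}" using assms(4) by auto
  moreover have "finite (?X U)" if "finite U" for U
    by (rule finite_subset[of _ "A \<times> U"]) (use that assms in auto)
  ultimately have "card (?X (B \<union> C)) = card (?X B) + card (?X C)"
    using assms by (simp add: card_Un_disjoint)
  then show ?thesis unfolding gsign_def by (simp add: power_add)
qed

lemma gsign_empty_left[simp]: "gsign {} U = 1" and gsign_empty_right[simp]: "gsign T {} = 1"
  unfolding gsign_def by simp_all

lemma gs_assoc:
  assumes "finite (T1 \<union> T2 \<union> W)" "T1 \<inter> T2 = {}" "(T1 \<union> T2) \<inter> W = {}"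
  shows "(gsign (T1 \<union> T2) W :: 'k::comm_ring_1) * gsign T1 T2 = gsign T1 (T2 \<union> W) * gsign T2 W"
proof -
  have "T2 \<inter> W = {}" using assms by auto
  then show ?thesis using assms by (simp add: gsign_Un_left gsign_Un_right Int_Un_distrib2 Int_commute mult_ac)
qed

lemma gs_assoc2:
  assumes "finite (A \<union> B \<union> C)" "A \<inter> B = {}" "(A \<union> B) \<inter> C = {}"
  shows "(gsign A (B \<union> C) :: 'k::comm_ring_1) * x * (gsign B C * y * z) = gsign (A \<union> B) C * (gsign A B * x * y) * z"
  using gs_assoc[OF assms, where 'k='k] by (simp add: mult_ac)

lemma sc_mult_assoc_fin:
  fixes f g h :: "'k::comm_ring_1 sc"
  assumes S: "finite S"
  shows "sc_mult (sc_mult f g) h (m, S) = sc_mult f (sc_mult g h) (m, S)"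
proof -
  define B where "B x = Dset (fst (fst x)) (snd (fst x))" for x :: "smono \<times> smono"
  define B' where "B' x = Dset (fst (snd x)) (snd (snd x))" for x :: "smono \<times> smono"
  define L where "L x y = (case x of ((a, T), (c, W)) \<Rightarrow> case y of ((a1, T1), (a2, T2)) \<Rightarrow>
      gsign T W * (gsign T1 T2 * f (a1, T1) * g (a2, T2)) * h (c, W))" for x y :: "smono \<times> smono"
  define R where "R x y = (case x of ((a1, T1), (d, V)) \<Rightarrow> case y of ((a2, T2), (a3, T3)) \<Rightarrow>
      gsign T1 V * f (a1, T1) * (gsign T2 T3 * g (a2, T2) * h (a3, T3)))" for x y :: "smono \<times> smono"
  have finB: "\<forall>x\<in>Dset m S. finite (B x)"
  proof
    fix x assume "x \<in> Dset m S"
    then have "finite (snd (fst x))" using S unfolding Dset_def by auto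
    then show "finite (B x)" unfolding B_def by (rule finite_Dset)
  qed
  have finB': "\<forall>x\<in>Dset m S. finite (B' x)"
  proof
    fix x assume "x \<in> Dset m S"
    then have "finite (snd (snd x))" using S unfolding Dset_def by auto
    then show "finite (B' x)" unfolding B'_def by (rule finite_Dset)
  qed
  have "sc_mult (sc_mult f g) h (m, S) = (\<Sum>x\<in>Dset m S. \<Sum>y\<in>B x. L x y)"
    unfolding sc_mult_eq
    by (intro sum.cong refl) (auto simp: B_def L_def sc_mult_eq sum_distrib_left sum_distrib_right intro!: sum.cong split: prod.splits)
  also have "\<dots> = (\<Sum>(x, y)\<in>Sigma (Dset m S) B. L x y)"
    by (rule sum.Sigma[OF finite_Dset[OF S] finB])
  also have "\<dots> = (\<Sum>(x, y)\<in>Sigma (Dset m S) B'. R x y)"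
    apply (rule sum.reindex_bij_witness[where
        j = "\<lambda>(((a, T), (c, W)), ((a1, T1), (a2, T2))). (((a1, T1), (a2 + c, T2 \<union> W)), ((a2, T2), (c, W)))"
        and i = "\<lambda>(((a1, T1), (d, V)), ((a2, T2), (a3, T3))). (((a1 + a2, T1 \<union> T2), (a3, T3)), ((a1, T1), (a2, T2)))"])
    apply (auto simp: B_def B'_def Dset_def add.assoc)[4]
    apply (clarsimp simp: B_def Dset_def L_def R_def)
    apply (rule gs_assoc2)
    using S by auto
  also have "\<dots> = (\<Sum>x\<in>Dset m S. \<Sum>y\<in>B' x. R x y)"
    by (rule sum.Sigma[OF finite_Dset[OF S] finB', symmetric])
  also have "\<dots> = sc_mult f (sc_mult g h) (m, S)"
    unfolding sc_mult_eq
    by (intro sum.cong refl) (auto simp: B'_def R_def sc_mult_eq sum_distrib_left sum_distrib_right intro!: sum.cong split: prod.splits)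
  finally show ?thesis .
qed


lemma sum_single:
  assumes "finite A" "x \<in> A" "\<And>y. y \<in> A \<Longrightarrow> y \<noteq> x \<Longrightarrow> F y = 0"
  shows "sum F A = F x"
proof -
  have "sum F A = sum F {x}"
    by (rule sum.mono_neutral_right) (use assms in auto)
  then show ?thesis by simp
qed

definition Gset :: "'k::comm_ring_1 sc set" where
  "Gset = {f. \<forall>m S. infinite S \<longrightarrow> f (m, S) = 0}"

lemma GsetD: "f \<in> Gset \<Longrightarrow> infinite S \<Longrightarrow> f (m, S) = 0"
  unfolding Gset_def by auto

lemma sc_mult_Gset: "f \<in> Gset \<Longrightarrow> g \<in> Gset \<Longrightarrow> sc_mult f g \<in> Gset"
  unfolding Gset_def
proof (clarify)
  fix m and S :: "nat set" assume f: "\<forall>m S. infinite S \<longrightarrow> f (m, S) = 0" and g: "\<forall>m S. infinite S \<longrightarrow> g (m, S) = 0"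
    and S: "infinite S"
  show "sc_mult f g (m, S) = 0" unfolding sc_mult_eq
  proof (rule sum.neutral, clarify)
    fix a T b U assume "((a, T), (b, U)) \<in> Dset m S"
    then have "infinite T \<or> infinite U" using S unfolding Dset_def by auto
    then show "gsign T U * f (a, T) * g (b, U) = 0" using f g by auto
  qed
qed

lemma sc_mult_assoc:
  assumes "f \<in> Gset" "g \<in> Gset" "h \<in> Gset"
  shows "sc_mult (sc_mult f g) h = sc_mult f (sc_mult g h)"
proof (rule ext, clarify)
  fix m S
  show "sc_mult (sc_mult f g) h (m, S) = sc_mult f (sc_mult g h) (m, S)"
  proof (cases "finite S")
    case True then show ?thesis by (rule sc_mult_assoc_fin)
  next
    case False
    then show ?thesis using assms sc_mult_Gset GsetD by metis
  qed
qed

lemma sc_mult_add_right: "sc_mult f (sc_add g h) = sc_add (sc_mult f g) (sc_mult f h)"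
  by (rule ext, clarify) (simp add: sc_mult_eq sc_add_def sum.distrib[symmetric] distrib_left distrib_right split_def)

lemma sc_mult_add_left: "sc_mult (sc_add f g) h = sc_add (sc_mult f h) (sc_mult g h)"
  by (rule ext, clarify) (simp add: sc_mult_eq sc_add_def sum.distrib[symmetric] distrib_left distrib_right split_def)

lemma sc_mult_scal_left: "sc_mult (sc_scal c f) g = sc_scal c (sc_mult f g)"
  by (rule ext, clarify) (simp add: sc_mult_eq sc_scal_def sum_distrib_left mult_ac split_def)

lemma sc_mult_scal_right: "sc_mult f (sc_scal c g) = sc_scal c (sc_mult f g)"
  by (rule ext, clarify) (simp add: sc_mult_eq sc_scal_def sum_distrib_left mult_ac split_def)

lemma sc_one_left: assumes "f \<in> Gset" shows "sc_mult sc_one f = f"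
proof (rule ext, clarify)
  fix m S
  show "sc_mult sc_one f (m, S) = f (m, S)"
  proof (cases "finite S")
    case True
    have "sc_mult sc_one f (m, S) = (\<lambda>((a, T), (b, U)). gsign T U * sc_one (a, T) * f (b, U)) ((0, {}), (m, S))"
      unfolding sc_mult_eq
      by (rule sum_single[OF finite_Dset[OF True]]) (auto simp: Dset_def sc_one_def split: if_splits)
    then show ?thesis by (simp add: sc_one_def)
  next
    case False
    have "sc_mult sc_one f (m, S) = 0" unfolding sc_mult_eq
    proof (rule sum.neutral, clarify)
      fix a T b U assume "((a, T), (b, U)) \<in> Dset m S"
      then show "gsign T U * sc_one (a, T) * f (b, U) = 0"
        using False GsetD[OF assms] unfolding Dset_def sc_one_def by auto
    qed
    then show ?thesis using False GsetD[OF assms] by simp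
  qed
qed

lemma sc_one_right: assumes "f \<in> Gset" shows "sc_mult f sc_one = f"
proof (rule ext, clarify)
  fix m S
  show "sc_mult f sc_one (m, S) = f (m, S)"
  proof (cases "finite S")
    case True
    have "sc_mult f sc_one (m, S) = (\<lambda>((a, T), (b, U)). gsign T U * f (a, T) * sc_one (b, U)) ((m, S), (0, {}))"
      unfolding sc_mult_eq
      by (rule sum_single[OF finite_Dset[OF True]]) (auto simp: Dset_def sc_one_def split: if_splits)
    then show ?thesis by (simp add: sc_one_def)
  next
    case False
    have "sc_mult f sc_one (m, S) = 0" unfolding sc_mult_eq
    proof (rule sum.neutral, clarify)
      fix a T b U assume "((a, T), (b, U)) \<in> Dset m S"
      then show "gsign T U * f (a, T) * sc_one (b, U) = 0"
        using False GsetD[OF assms] unfolding Dset_def sc_one_def by auto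
    qed
    then show ?thesis using False GsetD[OF assms] by simp
  qed
qed

lemma Gset_zero: "sc_zero \<in> Gset" and Gset_one: "sc_one \<in> Gset"
  and Gset_add: "f \<in> Gset \<Longrightarrow> g \<in> Gset \<Longrightarrow> sc_add f g \<in> Gset"
  and Gset_scal: "f \<in> Gset \<Longrightarrow> sc_scal c f \<in> Gset"
  unfolding Gset_def sc_zero_def sc_one_def sc_add_def sc_scal_def by auto

typedef (overloaded) ('k::comm_ring_1) G = "Gset :: 'k sc set" morphisms RG AG
  using Gset_zero by blast

setup_lifting type_definition_G

instantiation G :: (comm_ring_1) ring_1
begin
lift_definition zero_G :: "'a G" is sc_zero by (rule Gset_zero)
lift_definition one_G :: "'a G" is sc_one by (rule Gset_one)
lift_definition plus_G :: "'a G \<Rightarrow> 'a G \<Rightarrow> 'a G" is sc_add by (rule Gset_add)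
lift_definition uminus_G :: "'a G \<Rightarrow> 'a G" is "sc_scal (-1)" by (rule Gset_scal)
lift_definition minus_G :: "'a G \<Rightarrow> 'a G \<Rightarrow> 'a G" is "\<lambda>f g. sc_add f (sc_scal (-1) g)"
  by (intro Gset_add Gset_scal)
lift_definition times_G :: "'a G \<Rightarrow> 'a G \<Rightarrow> 'a G" is sc_mult by (rule sc_mult_Gset)
instance
proof
  fix a b c :: "'a G"
  show "a + b + c = a + (b + c)" by transfer (auto simp: sc_add_def add.assoc)
  show "a + b = b + a" by transfer (auto simp: sc_add_def add.commute)
  show "0 + a = a" by transfer (auto simp: sc_add_def sc_zero_def)
  show "- a + a = 0" by transfer (auto simp: sc_add_def sc_zero_def sc_scal_def)
  show "a - b = a + - b" by transfer simp
  show "a * b * c = a * (b * c)" by transfer (rule sc_mult_assoc)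
  show "1 * a = a" by transfer (rule sc_one_left)
  show "a * 1 = a" by transfer (rule sc_one_right)
  show "(a + b) * c = a * c + b * c" by transfer (rule sc_mult_add_left)
  show "a * (b + c) = a * b + a * c" by transfer (rule sc_mult_add_right)
  show "(0::'a G) \<noteq> 1"
  proof transfer
    have "sc_zero (0, {}) \<noteq> (sc_one (0, {}) :: 'a)" by (simp add: sc_zero_def sc_one_def)
    then show "(sc_zero :: 'a sc) \<noteq> sc_one" by metis
  qed
qed
end


lemma sum_Dset_left0:
  assumes S: "finite S"
    and z: "\<And>a T b U. ((a, T), (b, U)) \<in> Dset m S \<Longrightarrow> T \<noteq> {} \<Longrightarrow> F ((a, T), (b, U)) = 0"
  shows "sum F (Dset m S) = (\<Sum>(a, b)\<in>{(a, b). a + b = m}. F ((a, {}), (b, S)))"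
proof -
  have "sum F (Dset m S) = sum F ((\<lambda>(a, b). ((a, {}), (b, S))) ` {(a, b). a + b = m})"
  proof (rule sum.mono_neutral_right[OF finite_Dset[OF S]])
    show "(\<lambda>(a, b). ((a, {}), (b, S))) ` {(a, b). a + b = m} \<subseteq> Dset m S" by (auto simp: Dset_def)
    show "\<forall>i\<in>Dset m S - (\<lambda>(a, b). ((a, {}), (b, S))) ` {(a, b). a + b = m}. F i = 0"
    proof (clarify)
      fix a T b U assume i: "((a, T), (b, U)) \<in> Dset m S"
        and ni: "((a, T), (b, U)) \<notin> (\<lambda>(a, b). ((a, {}), (b, S))) ` {(a, b). a + b = m}"
      have "T \<noteq> {}"
      proof
        assume "T = {}"
        then have "((a, T), (b, U)) \<in> (\<lambda>(a, b). ((a, {}), (b, S))) ` {(a, b). a + b = m}"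
          using i by (auto simp: Dset_def intro!: image_eqI[where x = "(a, b)"])
        then show False using ni by blast
      qed
      then show "F ((a, T), (b, U)) = 0" using i z by blast
    qed
  qed
  also have "\<dots> = (\<Sum>(a, b)\<in>{(a, b). a + b = m}. F ((a, {}), (b, S)))"
    by (subst sum.reindex) (auto simp: inj_on_def split_def)
  finally show ?thesis .
qed

lemma sum_Dset_right0:
  assumes S: "finite S"
    and z: "\<And>a T b U. ((a, T), (b, U)) \<in> Dset m S \<Longrightarrow> U \<noteq> {} \<Longrightarrow> F ((a, T), (b, U)) = 0"
  shows "sum F (Dset m S) = (\<Sum>(a, b)\<in>{(a, b). a + b = m}. F ((a, S), (b, {})))"
proof -
  have "sum F (Dset m S) = sum F ((\<lambda>(a, b). ((a, S), (b, {}))) ` {(a, b). a + b = m})"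
  proof (rule sum.mono_neutral_right[OF finite_Dset[OF S]])
    show "(\<lambda>(a, b). ((a, S), (b, {}))) ` {(a, b). a + b = m} \<subseteq> Dset m S" by (auto simp: Dset_def)
    show "\<forall>i\<in>Dset m S - (\<lambda>(a, b). ((a, S), (b, {}))) ` {(a, b). a + b = m}. F i = 0"
    proof (clarify)
      fix a T b U assume i: "((a, T), (b, U)) \<in> Dset m S"
        and ni: "((a, T), (b, U)) \<notin> (\<lambda>(a, b). ((a, S), (b, {}))) ` {(a, b). a + b = m}"
      have "U \<noteq> {}"
      proof
        assume "U = {}"
        then have "((a, T), (b, U)) \<in> (\<lambda>(a, b). ((a, S), (b, {}))) ` {(a, b). a + b = m}"
          using i by (auto simp: Dset_def intro!: image_eqI[where x = "(a, b)"])
        then show False using ni by blast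
      qed
      then show "F ((a, T), (b, U)) = 0" using i z by blast
    qed
  qed
  also have "\<dots> = (\<Sum>(a, b)\<in>{(a, b). a + b = m}. F ((a, S), (b, {})))"
    by (subst sum.reindex) (auto simp: inj_on_def split_def)
  finally show ?thesis .
qed

lemma xv_Gset: "xv i \<in> Gset" and yv_Gset: "yv j \<in> Gset"
  unfolding Gset_def xv_def yv_def by auto

definition Xg :: "nat \<Rightarrow> 'k::comm_ring_1 G" where "Xg i = AG (xv i)"
definition Yg :: "nat \<Rightarrow> 'k::comm_ring_1 G" where "Yg j = AG (yv j)"

lemma RG_Xg: "RG (Xg i) = xv i" unfolding Xg_def by (rule AG_inverse[OF xv_Gset])
lemma RG_Yg: "RG (Yg i) = yv i" unfolding Yg_def by (rule AG_inverse[OF yv_Gset])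

lemma RG_nonzero_sum:
  assumes "RG (x * y) (m, S) \<noteq> 0"
  shows "\<exists>a T b U. a + b = m \<and> T \<union> U = S \<and> T \<inter> U = {} \<and> RG x (a, T) \<noteq> 0 \<and> RG y (b, U) \<noteq> 0"
proof -
  from assms have "(\<Sum>((a, T), (b, U)) \<in> Dset m S. gsign T U * RG x (a, T) * RG y (b, U)) \<noteq> 0"
    unfolding times_G.rep_eq sc_mult_eq .
  then obtain z where "z \<in> Dset m S"
    and "(\<lambda>((a, T), (b, U)). gsign T U * RG x (a, T) * RG y (b, U)) z \<noteq> 0"
    by (rule sum.not_neutral_contains_not_neutral)
  moreover obtain a T b U where zz: "z = ((a, T), (b, U))" by (cases z) auto
  ultimately show ?thesis unfolding Dset_def
    by (intro exI[of _ a] exI[of _ T] exI[of _ b] exI[of _ U]) auto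
qed

lemma Y_left:
  fixes z :: "'k::comm_ring_1 G"
  assumes S: "finite S"
  shows "RG (Yg a * z) (m, S) = (if a \<in> S then gsign {a} (S - {a}) * RG z (m, S - {a}) else 0)"
proof (cases "a \<in> S")
  case True
  have "RG (Yg a * z) (m, S) = (\<lambda>((a', T), (b, U)). gsign T U * yv a (a', T) * RG z (b, U)) ((0, {a}), (m, S - {a}))"
    unfolding times_G.rep_eq sc_mult_eq RG_Yg
  proof (rule sum_single[OF finite_Dset[OF S]], goal_cases)
    case 1
    show "((0, {a}), (m, S - {a})) \<in> Dset m S" using True by (auto simp: Dset_def)
  next
    case (2 y)
    note y = 2
    obtain a' T b U where yy: "y = ((a', T), (b, U))" by (cases y) auto
    have "yv a (a', T) = (0::'k)"
    proof (rule ccontr)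
      assume "yv a (a', T) \<noteq> (0::'k)"
      then have "a' = 0" "T = {a}" by (auto simp: yv_def split: if_splits)
      moreover have "a' + b = m" "T \<union> U = S" "T \<inter> U = {}" using y(1) yy by (auto simp: Dset_def)
      ultimately have "b = m" "U = S - {a}" by auto
      then show False using y(2) yy \<open>a' = 0\<close> \<open>T = {a}\<close> by simp
    qed
    then show ?case using yy by simp
  qed
  then show ?thesis using True by (simp add: yv_def)
next
  case False
  have "RG (Yg a * z) (m, S) = 0"
    unfolding times_G.rep_eq sc_mult_eq RG_Yg
    by (rule sum.neutral) (use False in \<open>auto simp: Dset_def yv_def\<close>)
  then show ?thesis using False by simp
qed

lemma Y_right:
  fixes z :: "'k::comm_ring_1 G"
  assumes S: "finite S"
  shows "RG (z * Yg a) (m, S) = (if a \<in> S then gsign (S - {a}) {a} * RG z (m, S - {a}) else 0)"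
proof (cases "a \<in> S")
  case True
  have "RG (z * Yg a) (m, S) = (\<lambda>((a', T), (b, U)). gsign T U * RG z (a', T) * yv a (b, U)) ((m, S - {a}), (0, {a}))"
    unfolding times_G.rep_eq sc_mult_eq RG_Yg
  proof (rule sum_single[OF finite_Dset[OF S]], goal_cases)
    case 1
    show "((m, S - {a}), (0, {a})) \<in> Dset m S" using True by (auto simp: Dset_def)
  next
    case (2 y)
    note y = 2
    obtain a' T b U where yy: "y = ((a', T), (b, U))" by (cases y) auto
    have "yv a (b, U) = (0::'k)"
    proof (rule ccontr)
      assume "yv a (b, U) \<noteq> (0::'k)"
      then have "b = 0" "U = {a}" by (auto simp: yv_def split: if_splits)
      moreover have "a' + b = m" "T \<union> U = S" "T \<inter> U = {}" using y(1) yy by (auto simp: Dset_def)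
      ultimately have "a' = m" "T = S - {a}" by auto
      then show False using y(2) yy \<open>b = 0\<close> \<open>U = {a}\<close> by simp
    qed
    then show ?case using yy by simp
  qed
  then show ?thesis using True by (simp add: yv_def)
next
  case False
  have "RG (z * Yg a) (m, S) = 0"
    unfolding times_G.rep_eq sc_mult_eq RG_Yg
    by (rule sum.neutral) (use False in \<open>auto simp: Dset_def yv_def\<close>)
  then show ?thesis using False by simp
qed

lemma gsign_single: "(gsign {a} {b} :: 'k::comm_ring_1) = (if b < a then -1 else 1)"
proof -
  have "{(t, u). t \<in> {a} \<and> u \<in> {b} \<and> u < t} = (if b < a then {(a, b)} else {})" by auto
  then show ?thesis unfolding gsign_def by simp
qed

lemma G_eqI:
  fixes x y :: "'k::comm_ring_1 G"
  assumes "\<And>m S. finite S \<Longrightarrow> RG x (m, S) = RG y (m, S)"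
  shows "x = y"
proof -
  have "RG x = RG y"
  proof (rule ext, clarify)
    fix m and S :: "nat set"
    show "RG x (m, S) = RG y (m, S)"
    proof (cases "finite S")
      case True then show ?thesis by (rule assms)
    next
      case False then show ?thesis using GsetD[OF RG[of x]] GsetD[OF RG[of y]] by simp
    qed
  qed
  then show ?thesis by (simp add: RG_inject)
qed

lemma YY_zero: "(Yg a * Yg a :: 'k::comm_ring_1 G) = 0"
proof (rule G_eqI)
  fix m and S :: "nat set" assume S: "finite S"
  have "yv a (m, S - {a}) = (0::'k)" by (auto simp: yv_def)
  then show "RG (Yg a * Yg a) (m, S) = RG (0::'k G) (m, S)"
    by (simp add: Y_left[OF S] RG_Yg zero_G.rep_eq sc_zero_def)
qed

lemma YY_anti:
  assumes "a \<noteq> b"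
  shows "(Yg a * Yg b :: 'k::comm_ring_1 G) = - (Yg b * Yg a)"
proof (rule G_eqI)
  fix m and S :: "nat set" assume S: "finite S"
  have e1: "(a \<in> S \<and> S - {a} = {b}) \<longleftrightarrow> S = {a, b}" using assms by auto
  have e2: "(b \<in> S \<and> S - {b} = {a}) \<longleftrightarrow> S = {a, b}" using assms by auto
  show "RG (Yg a * Yg b :: 'k G) (m, S) = RG (- (Yg b * Yg a)) (m, S)"
  proof (cases "S = {a, b}")
    case True
    then have "S - {a} = {b}" "S - {b} = {a}" "a \<in> S" "b \<in> S" using assms by auto
    then show ?thesis unfolding uminus_G.rep_eq using assms
      by (cases "a < b") (simp_all add: Y_left[OF S] RG_Yg yv_def sc_scal_def gsign_single)
  next
    case False
    then have "\<not> (a \<in> S \<and> S - {a} = {b})" "\<not> (b \<in> S \<and> S - {b} = {a})" using e1 e2 by auto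
    then have y1: "a \<in> S \<Longrightarrow> yv b (m, S - {a}) = (0::'k)"
      and y2: "b \<in> S \<Longrightarrow> yv a (m, S - {b}) = (0::'k)" by (auto simp: yv_def)
    show ?thesis unfolding uminus_G.rep_eq sc_scal_def Y_left[OF S] RG_Yg using y1 y2 by simp
  qed
qed

definition pol :: "'k::comm_ring_1 G \<Rightarrow> bool" where
  "pol x \<longleftrightarrow> (\<forall>m S. RG x (m, S) \<noteq> 0 \<longrightarrow> S = {})"

lemma pol_central:
  fixes x z :: "'k::comm_ring_1 G"
  assumes px: "pol x"
  shows "x * z = z * x"
proof -
  have "RG (x * z) = RG (z * x)"
  proof (rule ext, clarify)
    fix m and S :: "nat set"
    show "RG (x * z) (m, S) = RG (z * x) (m, S)"
    proof (cases "finite S")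
      case False
      then show ?thesis using RG[of "x * z"] RG[of "z * x"] GsetD by metis
    next
      case S: True
      have x0: "RG x (a, T) = 0" if "T \<noteq> {}" for a T using px that unfolding pol_def by auto
      have "RG (x * z) (m, S) = (\<Sum>(a, b)\<in>{(a, b). a + b = m}. RG x (a, {}) * RG z (b, S))"
        unfolding times_G.rep_eq sc_mult_eq
        by (subst sum_Dset_left0[OF S]) (auto simp: x0)
      also have "\<dots> = (\<Sum>(a, b)\<in>{(a, b). a + b = m}. RG z (a, S) * RG x (b, {}))"
        by (rule sum.reindex_bij_witness[where i = "\<lambda>(a, b). (b, a)" and j = "\<lambda>(a, b). (b, a)"])
          (auto simp: add.commute mult.commute)
      also have "\<dots> = RG (z * x) (m, S)"
        unfolding times_G.rep_eq sc_mult_eq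
        by (subst sum_Dset_right0[OF S]) (auto simp: x0)
      finally show ?thesis .
    qed
  qed
  then show ?thesis by (simp add: RG_inject)
qed




lemma RG_plus: "RG (x + y) = sc_add (RG x) (RG y)" by (rule plus_G.rep_eq)
lemma RG_uminus: "RG (- x) = sc_scal (-1) (RG x)" by (rule uminus_G.rep_eq)
lemma RG_minus: "RG (x - y) = sc_add (RG x) (sc_scal (-1) (RG y))" by (rule minus_G.rep_eq)
lemma RG_zero: "RG 0 = sc_zero" by (rule zero_G.rep_eq)
lemma RG_one: "RG 1 = sc_one" by (rule one_G.rep_eq)

lemma pol_zero[simp]: "pol 0" and pol_one[simp]: "pol 1"
  by (simp_all add: pol_def RG_zero RG_one sc_zero_def sc_one_def)

lemma pol_add[simp]: "pol x \<Longrightarrow> pol y \<Longrightarrow> pol (x + y)"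
  unfolding pol_def RG_plus sc_add_def by (metis add.left_neutral)

lemma pol_uminus[simp]: "pol x \<Longrightarrow> pol (- x)"
  by (simp add: pol_def RG_uminus sc_scal_def)

lemma pol_diff[simp]: "pol x \<Longrightarrow> pol y \<Longrightarrow> pol (x - y)"
  unfolding diff_conv_add_uminus by (intro pol_add pol_uminus)

lemma pol_mult[simp]: "pol x \<Longrightarrow> pol y \<Longrightarrow> pol (x * y)"
  unfolding pol_def by (metis RG_nonzero_sum sup_bot.right_neutral)

lemma pol_Xg[simp]: "pol (Xg i)" by (simp add: pol_def RG_Xg xv_def)

definition Jd :: "nat \<Rightarrow> 'k::comm_ring_1 G \<Rightarrow> bool" where
  "Jd k x \<longleftrightarrow> (\<forall>m S. RG x (m, S) \<noteq> 0 \<longrightarrow> S \<subseteq> {..3} \<and> k \<le> card S)"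

lemma Jd_zero[simp]: "Jd k 0" by (simp add: Jd_def RG_zero sc_zero_def)

lemma Jd_add: "Jd k x \<Longrightarrow> Jd k y \<Longrightarrow> Jd k (x + y)"
  unfolding Jd_def RG_plus sc_add_def by (metis add.left_neutral)

lemma Jd_uminus: "Jd k x \<Longrightarrow> Jd k (- x)"
  by (simp add: Jd_def RG_uminus sc_scal_def)

lemma Jd_diff: "Jd k x \<Longrightarrow> Jd k y \<Longrightarrow> Jd k (x - y)"
  unfolding diff_conv_add_uminus by (intro Jd_add Jd_uminus)

lemma Jd_mono: "Jd k x \<Longrightarrow> l \<le> k \<Longrightarrow> Jd l x"
  unfolding Jd_def using le_trans by blast

lemma Jd_mult: assumes "Jd a x" "Jd b y" "c \<le> a + b" shows "Jd c (x * y)"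
  unfolding Jd_def
proof (intro allI impI)
  fix m S assume "RG (x * y) (m, S) \<noteq> 0"
  then obtain p T q U where h: "p + q = m" "T \<union> U = S" "T \<inter> U = {}" "RG x (p, T) \<noteq> 0" "RG y (q, U) \<noteq> 0"
    using RG_nonzero_sum by blast
  then have "T \<subseteq> {..3}" "a \<le> card T" "U \<subseteq> {..3}" "b \<le> card U" using assms unfolding Jd_def by auto
  moreover then have "finite T" "finite U" by (auto intro: finite_subset)
  ultimately show "S \<subseteq> {..3} \<and> c \<le> card S" using h assms(3) by (auto simp: card_Un_disjoint)
qed

lemma Jd_five: assumes "Jd k x" "5 \<le> k" shows "x = 0"
proof (rule G_eqI)
  fix m and S :: "nat set"
  show "RG x (m, S) = RG 0 (m, S)"
  proof (rule ccontr)
    assume "RG x (m, S) \<noteq> RG 0 (m, S)"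
    then have "RG x (m, S) \<noteq> 0" by (simp add: RG_zero sc_zero_def)
    then have "S \<subseteq> {..3}" "k \<le> card S" using assms unfolding Jd_def by auto
    then have "card S \<le> 4" using card_mono[of "{..3::nat}" S] by auto
    then show False using assms \<open>k \<le> card S\<close> by simp
  qed
qed

lemma Jd_pol: "pol x \<Longrightarrow> Jd 0 x" unfolding pol_def Jd_def by auto

lemma Jd_Y: "k \<le> 3 \<Longrightarrow> Jd 1 (Yg k)" unfolding Jd_def RG_Yg yv_def by auto

lemma trip:
  assumes "Jd a x0" "Jd (a + 2) xr" "Jd b y0" "Jd (b + 2) yr" "Jd c z0" "Jd (c + 2) zr" "3 \<le> a + b + c"
  shows "(x0 + xr) * (y0 + yr) * (z0 + zr) = x0 * y0 * z0"
proof -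
  have z: "u * v * w = 0" if "Jd i u" "Jd j v" "Jd k w" "5 \<le> i + j + k" for u v w :: "'a G" and i j k
    by (rule Jd_five[OF Jd_mult[OF Jd_mult[OF that(1,2) order.refl] that(3) order.refl] that(4)])
  have "(x0 + xr) * (y0 + yr) * (z0 + zr) = x0 * y0 * z0 + x0 * y0 * zr + x0 * yr * z0 + x0 * yr * zr
     + xr * y0 * z0 + xr * y0 * zr + xr * yr * z0 + xr * yr * zr"
    by (simp add: algebra_simps)
  also have "\<dots> = x0 * y0 * z0"
  proof -
    note A = assms
    have "x0 * y0 * zr = 0" by (rule z[OF A(1) A(3) A(6)]) (use A(7) in simp)
    moreover have "x0 * yr * z0 = 0" by (rule z[OF A(1) A(4) A(5)]) (use A(7) in simp)
    moreover have "x0 * yr * zr = 0" by (rule z[OF A(1) A(4) A(6)]) (use A(7) in simp)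
    moreover have "xr * y0 * z0 = 0" by (rule z[OF A(2) A(3) A(5)]) (use A(7) in simp)
    moreover have "xr * y0 * zr = 0" by (rule z[OF A(2) A(3) A(6)]) (use A(7) in simp)
    moreover have "xr * yr * z0 = 0" by (rule z[OF A(2) A(4) A(5)]) (use A(7) in simp)
    moreover have "xr * yr * zr = 0" by (rule z[OF A(2) A(4) A(6)]) (use A(7) in simp)
    ultimately show ?thesis by simp
  qed
  finally show ?thesis .
qed


typedef (overloaded) ('k::comm_ring_1) Pol = "{x :: 'k G. pol x}" morphisms \<iota> AP
  by (rule exI[of _ 0]) simp

setup_lifting type_definition_Pol

instantiation Pol :: (comm_ring_1) comm_ring_1
begin
lift_definition zero_Pol :: "'a Pol" is 0 by simp
lift_definition one_Pol :: "'a Pol" is 1 by simp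
lift_definition plus_Pol :: "'a Pol \<Rightarrow> 'a Pol \<Rightarrow> 'a Pol" is "(+)" by simp
lift_definition uminus_Pol :: "'a Pol \<Rightarrow> 'a Pol" is uminus by simp
lift_definition minus_Pol :: "'a Pol \<Rightarrow> 'a Pol \<Rightarrow> 'a Pol" is "(-)" by simp
lift_definition times_Pol :: "'a Pol \<Rightarrow> 'a Pol \<Rightarrow> 'a Pol" is "(*)" by simp
instance
proof
  fix a b c :: "'a Pol"
  show "a * b * c = a * (b * c)" by transfer (simp add: mult.assoc)
  show "a * b = b * a" by transfer (metis pol_central)
  show "1 * a = a" by transfer simp
  show "(a + b) * c = a * c + b * c" by transfer (simp add: distrib_right)
  show "a + b + c = a + (b + c)" by transfer (simp add: add.assoc)
  show "a + b = b + a" by transfer (simp add: add.commute)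
  show "0 + a = a" by transfer simp
  show "- a + a = 0" by transfer simp
  show "a - b = a + - b" by transfer simp
  show "(0::'a Pol) \<noteq> 1" by transfer simp
qed
end

lemma \<iota>_add: "\<iota> (p + q) = \<iota> p + \<iota> q" by (rule plus_Pol.rep_eq)
lemma \<iota>_mult: "\<iota> (p * q) = \<iota> p * \<iota> q" by (rule times_Pol.rep_eq)
lemma \<iota>_minus: "\<iota> (p - q) = \<iota> p - \<iota> q" by (rule minus_Pol.rep_eq)
lemma \<iota>_uminus: "\<iota> (- p) = - \<iota> p" by (rule uminus_Pol.rep_eq)
lemma \<iota>_zero: "\<iota> 0 = 0" by (rule zero_Pol.rep_eq)
lemma \<iota>_one: "\<iota> 1 = 1" by (rule one_Pol.rep_eq)
lemma pol_\<iota>: "pol (\<iota> p)" using \<iota> by simp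

lemma \<iota>_central: "\<iota> p * z = z * \<iota> p" by (rule pol_central[OF pol_\<iota>])

lemma Y_swap: "a < b \<Longrightarrow> (Yg b * Yg a :: 'k::comm_ring_1 G) = - (Yg a * Yg b)"
  using YY_anti[of b a] by simp
lemma Y_swap2: "a < b \<Longrightarrow> (Yg b * (Yg a * z) :: 'k::comm_ring_1 G) = - (Yg a * (Yg b * z))"
  by (simp only: mult.assoc[symmetric] Y_swap) simp
lemma Y_sq2: "(Yg a * (Yg a * z) :: 'k::comm_ring_1 G) = 0"
  by (simp only: mult.assoc[symmetric] YY_zero) simp
lemma \<iota>_Y: "Yg k * \<iota> p = \<iota> p * Yg k"
  by (rule \<iota>_central[symmetric])
lemma \<iota>_Y2: "Yg k * (\<iota> p * z) = \<iota> p * (Yg k * z)"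
  by (simp only: mult.assoc[symmetric] \<iota>_Y)
lemma \<iota>_comm: "\<iota> p * \<iota> q = \<iota> q * \<iota> p"
  by (rule \<iota>_central)
lemma \<iota>_comm2: "\<iota> p * (\<iota> q * z) = \<iota> q * (\<iota> p * z)"
  by (simp only: mult.assoc[symmetric] \<iota>_comm[of p q])

lemmas sym_simps = Y_swap Y_swap2 Y_sq2 YY_zero \<iota>_Y \<iota>_Y2 \<iota>_comm \<iota>_comm2
  \<iota>_add \<iota>_mult \<iota>_minus \<iota>_uminus
  distrib_left distrib_right left_diff_distrib right_diff_distrib mult.assoc mult_minus_left mult_minus_right

definition ej :: "bool \<Rightarrow> 'k::comm_ring_1 Pol \<Rightarrow> 'k Pol \<Rightarrow> 'k Pol" where
  "ej b e0 e1 = (if b then e1 else e0)"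
definition jn :: "bool \<Rightarrow> nat" where "jn b = (if b then 1 else 0)"
definition jn2 :: "bool \<Rightarrow> nat" where "jn2 b = (if b then 3 else 2)"

definition gY :: "'k::comm_ring_1 Pol \<Rightarrow> 'k Pol \<Rightarrow> 'k G" where
  "gY g0 g1 = \<iota> g0 * Yg 0 + \<iota> g1 * Yg 1"
definition hY :: "'k::comm_ring_1 Pol \<Rightarrow> 'k Pol \<Rightarrow> 'k Pol \<Rightarrow> 'k Pol \<Rightarrow> 'k Pol \<Rightarrow> 'k G" where
  "hY e0 e1 g0 g1 t = \<iota> (g0 - e1 * t) * Yg 2 + \<iota> (g1 + e0 * t) * Yg 3"
definition Am where "Am b e0 e1 g0 g1 t = gY g0 g1 * Yg (jn2 b) - Yg (jn b) * hY e0 e1 g0 g1 t"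
definition Dm where "Dm b e0 e1 g0 g1 t = hY e0 e1 g0 g1 t * Yg (jn b) - Yg (jn2 b) * gY g0 g1"
definition Bm where "Bm b e0 e1 g0 g1 (t::'k::comm_ring_1 Pol) = \<iota> (e0 * g0 + e1 * g1) * Yg (jn b) - \<iota> (ej b e0 e1) * gY g0 g1"
definition Cm where "Cm b e0 e1 g0 g1 t = \<iota> (ej b e0 e1) * hY e0 e1 g0 g1 t - \<iota> (e0 * g0 + e1 * g1) * Yg (jn2 b)"

lemmas Zdefs = Am_def Dm_def Bm_def Cm_def gY_def hY_def ej_def jn_def jn2_def


definition Gmat :: "'k::comm_ring_1 mat2 \<Rightarrow> bool" where
  "Gmat A \<longleftrightarrow> (\<forall>i j. A i j \<in> Gset)"

definition gm :: "'k::comm_ring_1 mat2 \<Rightarrow> bool \<Rightarrow> bool \<Rightarrow> 'k G" where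
  "gm A i j = AG (A i j)"

lemma AG_add: "a \<in> Gset \<Longrightarrow> b \<in> Gset \<Longrightarrow> AG (sc_add a b) = AG a + AG b"
  by (metis RG_plus AG_inverse RG_inverse)
lemma AG_mult: "a \<in> Gset \<Longrightarrow> b \<in> Gset \<Longrightarrow> AG (sc_mult a b) = AG a * AG b"
  by (metis times_G.rep_eq AG_inverse RG_inverse)

definition Kp :: "'k::comm_ring_1 \<Rightarrow> 'k Pol" where
  "Kp c = AP (AG (sc_scal c sc_one))"

lemma scal_one_Gset: "sc_scal c sc_one \<in> Gset" by (intro Gset_scal Gset_one)

lemma pol_scal_one: "pol (AG (sc_scal c sc_one) :: 'k::comm_ring_1 G)"
proof -
  have "RG (AG (sc_scal c sc_one)) = (sc_scal c sc_one :: 'k::comm_ring_1 sc)" by (rule AG_inverse[OF scal_one_Gset])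
  then show ?thesis unfolding pol_def by (simp add: sc_scal_def sc_one_def)
qed

lemma \<iota>_Kp: "\<iota> (Kp c) = AG (sc_scal c sc_one)"
  unfolding Kp_def by (rule AP_inverse) (simp add: pol_scal_one)

lemma AG_scal: "a \<in> Gset \<Longrightarrow> AG (sc_scal c a) = \<iota> (Kp c) * AG a"
proof -
  assume a: "a \<in> Gset"
  have "sc_scal c a = sc_mult (sc_scal c sc_one) a"
    by (simp add: sc_mult_scal_left sc_one_left[OF a])
  then show ?thesis using a by (simp add: \<iota>_Kp AG_mult scal_one_Gset)
qed

lemma Kp_m1: "Kp (-1) = (-1 :: 'k::comm_ring_1 Pol)"
proof -
  have "\<iota> (Kp (-1)) = (\<iota> (-1) :: 'k G)"
    unfolding \<iota>_Kp \<iota>_uminus \<iota>_one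
    by (metis AG_scal Gset_one RG_inverse mult.right_neutral one_G.rep_eq uminus_G.rep_eq \<iota>_Kp)
  then show ?thesis by (simp add: \<iota>_inject)
qed

lemma Gmat_madd: "Gmat A \<Longrightarrow> Gmat B \<Longrightarrow> Gmat (madd A B)"
  unfolding Gmat_def madd_def by (simp add: Gset_add)
lemma Gmat_mmul: "Gmat A \<Longrightarrow> Gmat B \<Longrightarrow> Gmat (mmul A B)"
  unfolding Gmat_def mmul_def by (simp add: Gset_add sc_mult_Gset)
lemma Gmat_mscal: "Gmat A \<Longrightarrow> Gmat (mscal c A)"
  unfolding Gmat_def mscal_def by (simp add: Gset_scal)
lemma Gmat_mone: "Gmat mone"
  unfolding Gmat_def mone_def by (simp add: Gset_one Gset_zero)
lemma Gmat_C1: "Gmat C1" and Gmat_C2: "Gmat C2"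
  unfolding Gmat_def C1_def C2_def mk2_def by (simp_all add: xv_Gset yv_Gset)

lemma Gmat_genF: "A \<in> genF \<Longrightarrow> Gmat A"
  by (induction rule: genF.induct) (auto intro: Gmat_madd Gmat_mmul Gmat_mscal Gmat_mone Gmat_C1 Gmat_C2)

lemma gm_madd: "Gmat A \<Longrightarrow> Gmat B \<Longrightarrow> gm (madd A B) i j = gm A i j + gm B i j"
  unfolding Gmat_def gm_def madd_def by (simp add: AG_add)
lemma gm_mmul: "Gmat A \<Longrightarrow> Gmat B \<Longrightarrow>
    gm (mmul A B) i j = gm A i False * gm B False j + gm A i True * gm B True j"
  unfolding Gmat_def gm_def mmul_def by (simp add: AG_add AG_mult sc_mult_Gset)
lemma gm_mscal: "Gmat A \<Longrightarrow> gm (mscal c A) i j = \<iota> (Kp c) * gm A i j"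
  unfolding Gmat_def gm_def mscal_def by (simp add: AG_scal)
lemma gm_mone: "gm mone i j = (if i = j then 1 else 0)"
proof -
  have "AG sc_one = (1 :: 'a::comm_ring_1 G)" by (metis RG_inverse one_G.rep_eq)
  moreover have "AG sc_zero = (0 :: 'a G)" by (metis RG_inverse zero_G.rep_eq)
  ultimately show ?thesis unfolding gm_def mone_def by simp
qed

definition XP :: "nat \<Rightarrow> 'k::comm_ring_1 Pol" where "XP i = AP (Xg i)"
lemma \<iota>_XP: "\<iota> (XP i) = Xg i" unfolding XP_def using AP_inverse[of "Xg i"] by simp

lemma gm_C1: "gm C1 False False = \<iota> (XP 0)" "gm C1 False True = Yg 0"
  "gm C1 True False = Yg 2" "gm C1 True True = \<iota> (XP 2)"
  unfolding gm_def C1_def mk2_def \<iota>_XP Xg_def Yg_def by simp_all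
lemma gm_C2: "gm C2 False False = \<iota> (XP 1)" "gm C2 False True = Yg 1"
  "gm C2 True False = Yg 3" "gm C2 True True = \<iota> (XP 3)"
  unfolding gm_def C2_def mk2_def \<iota>_XP Xg_def Yg_def by simp_all

lemma Gmat_eqI: "Gmat A \<Longrightarrow> Gmat B \<Longrightarrow> (\<And>i j. gm A i j = gm B i j) \<Longrightarrow> A = B"
  unfolding Gmat_def gm_def by (metis AG_inject ext)

lemma gm_mcomm: "Gmat A \<Longrightarrow> Gmat B \<Longrightarrow> gm (mcomm A B) i j = gm (mmul A B) i j - gm (mmul B A) i j"
  unfolding mcomm_def by (simp add: gm_madd Gmat_mmul Gmat_mscal gm_mscal Kp_m1 \<iota>_uminus \<iota>_one)


definition E0 :: "'k::comm_ring_1 Pol" where "E0 = XP 0 - XP 2"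
definition E1 :: "'k::comm_ring_1 Pol" where "E1 = XP 1 - XP 3"

lemma central_swap: "z * \<iota> p = \<iota> p * z" by (rule \<iota>_central[symmetric])
lemma central_swap2: "z * (\<iota> p * w) = \<iota> p * (z * w)"
  by (simp only: mult.assoc[symmetric] central_swap)

definition Inv :: "'k::comm_ring_1 mat2 \<Rightarrow> bool" where
  "Inv A \<longleftrightarrow> Gmat A \<and> (\<exists>f g0 g1 t r11 r22 r12 r21.
     gm A False False = \<iota> (f + E0 * g0 + E1 * g1) + r11 \<and> gm A True True = \<iota> f + r22 \<and>
     gm A False True = gY g0 g1 + r12 \<and> gm A True False = hY E0 E1 g0 g1 t + r21 \<and>
     Jd 2 r11 \<and> Jd 2 r22 \<and> Jd 3 r12 \<and> Jd 3 r21)"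

lemma Jd_\<iota>: "Jd 0 (\<iota> p)" by (rule Jd_pol[OF pol_\<iota>])
lemma Jd_Yg: "Jd 1 (Yg 0)" "Jd 1 (Yg 1)" "Jd 1 (Yg 2)" "Jd 1 (Yg 3)"
  by (rule Jd_Y; simp)+
lemma Jd_gY: "Jd 1 (gY g0 g1)" unfolding gY_def
  by (intro Jd_add Jd_mult[OF Jd_\<iota> Jd_Yg(1)] Jd_mult[OF Jd_\<iota> Jd_Yg(2)]) simp_all
lemma Jd_hY: "Jd 1 (hY e0 e1 g0 g1 t)" unfolding hY_def
  by (intro Jd_add Jd_mult[OF Jd_\<iota> Jd_Yg(3)] Jd_mult[OF Jd_\<iota> Jd_Yg(4)]) simp_all

lemma Jd_m: "Jd a x \<Longrightarrow> Jd b y \<Longrightarrow> a + b = c \<Longrightarrow> Jd c (x * y)"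
  by (rule Jd_mult) auto

lemma InvI:
  assumes "Gmat A" "gm A False False = \<iota> (f + E0 * ga + E1 * gb) + ra" "gm A True True = \<iota> f + rd"
    "gm A False True = gY ga gb + rb" "gm A True False = hY E0 E1 ga gb t + rc"
    "Jd 2 ra" "Jd 2 rd" "Jd 3 rb" "Jd 3 rc"
  shows "Inv A"
  unfolding Inv_def using assms by blast

lemma gY00: "gY 0 0 = 0" unfolding gY_def by (simp add: \<iota>_zero)
lemma hY000: "hY e0 e1 0 0 0 = 0" unfolding hY_def by (simp add: \<iota>_zero)

lemma Jd_\<iota>l: "Jd k y \<Longrightarrow> Jd k (\<iota> p * y)" by (rule Jd_m[OF Jd_\<iota>]) auto
lemma Jd_\<iota>r: "Jd k y \<Longrightarrow> Jd k (y * \<iota> p)" by (rule Jd_m[OF _ Jd_\<iota>]) auto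

lemma Inv_mone: "Inv mone"
  by (rule InvI[where f = 1 and ga = 0 and gb = 0 and t = 0 and ra = 0 and rd = 0 and rb = 0 and rc = 0])
     (simp_all add: Gmat_mone gm_mone gY00 hY000 \<iota>_one)

lemma Inv_C1: "Inv C1"
  by (rule InvI[where f = "XP 2" and ga = 1 and gb = 0 and t = 0 and ra = 0 and rd = 0 and rb = 0 and rc = 0])
     (simp_all add: Gmat_C1 gm_C1 gY_def hY_def E0_def \<iota>_one \<iota>_zero)

lemma Inv_C2: "Inv C2"
  by (rule InvI[where f = "XP 3" and ga = 0 and gb = 1 and t = 0 and ra = 0 and rd = 0 and rb = 0 and rc = 0])
     (simp_all add: Gmat_C2 gm_C2 gY_def hY_def E1_def \<iota>_one \<iota>_zero)

lemma InvE:
  assumes "Inv A"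
  obtains f ga gb t ra rd rb rc where "Gmat A" "gm A False False = \<iota> (f + E0 * ga + E1 * gb) + ra" "gm A True True = \<iota> f + rd"
    "gm A False True = gY ga gb + rb" "gm A True False = hY E0 E1 ga gb t + rc"
    "Jd 2 ra" "Jd 2 rd" "Jd 3 rb" "Jd 3 rc"
  using assms unfolding Inv_def by (elim conjE exE) (rule that; assumption)

lemma Inv_add:
  assumes "Inv A" "Inv B" shows "Inv (madd A B)"
proof -
  obtain f ga gb t ra rd rb rc where A: "Gmat A" "gm A False False = \<iota> (f + E0 * ga + E1 * gb) + ra" "gm A True True = \<iota> f + rd"
    "gm A False True = gY ga gb + rb" "gm A True False = hY E0 E1 ga gb t + rc"
    "Jd 2 ra" "Jd 2 rd" "Jd 3 rb" "Jd 3 rc" by (rule InvE[OF assms(1)])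
  obtain f' ga' gb' t' ra' rd' rb' rc' where B: "Gmat B" "gm B False False = \<iota> (f' + E0 * ga' + E1 * gb') + ra'" "gm B True True = \<iota> f' + rd'"
    "gm B False True = gY ga' gb' + rb'" "gm B True False = hY E0 E1 ga' gb' t' + rc'"
    "Jd 2 ra'" "Jd 2 rd'" "Jd 3 rb'" "Jd 3 rc'" by (rule InvE[OF assms(2)])
  show ?thesis
    by (rule InvI[where f = "f + f'" and ga = "ga + ga'" and gb = "gb + gb'" and t = "t + t'"
        and ra = "ra + ra'" and rd = "rd + rd'" and rb = "rb + rb'" and rc = "rc + rc'"])
       (simp_all add: A B Gmat_madd gm_madd Jd_add gY_def hY_def sym_simps)
qed

lemma Inv_scal:
  assumes "Inv A" shows "Inv (mscal c A)"
proof -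
  obtain f ga gb t ra rd rb rc where A: "Gmat A" "gm A False False = \<iota> (f + E0 * ga + E1 * gb) + ra" "gm A True True = \<iota> f + rd"
    "gm A False True = gY ga gb + rb" "gm A True False = hY E0 E1 ga gb t + rc"
    "Jd 2 ra" "Jd 2 rd" "Jd 3 rb" "Jd 3 rc" by (rule InvE[OF assms(1)])
  let ?k = "Kp c"
  show ?thesis
    by (rule InvI[where f = "?k * f" and ga = "?k * ga" and gb = "?k * gb" and t = "?k * t"
        and ra = "\<iota> ?k * ra" and rd = "\<iota> ?k * rd" and rb = "\<iota> ?k * rb" and rc = "\<iota> ?k * rc"])
       (simp_all add: A Gmat_mscal gm_mscal Jd_\<iota>l gY_def hY_def sym_simps)
qed

lemma Inv_mul:
  assumes "Inv A" "Inv B" shows "Inv (mmul A B)"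
proof -
  obtain f ga gb t ra rd rb rc where A: "Gmat A" "gm A False False = \<iota> (f + E0 * ga + E1 * gb) + ra" "gm A True True = \<iota> f + rd"
    "gm A False True = gY ga gb + rb" "gm A True False = hY E0 E1 ga gb t + rc"
    "Jd 2 ra" "Jd 2 rd" "Jd 3 rb" "Jd 3 rc" by (rule InvE[OF assms(1)])
  obtain f' ga' gb' t' ra' rd' rb' rc' where B: "Gmat B" "gm B False False = \<iota> (f' + E0 * ga' + E1 * gb') + ra'" "gm B True True = \<iota> f' + rd'"
    "gm B False True = gY ga' gb' + rb'" "gm B True False = hY E0 E1 ga' gb' t' + rc'"
    "Jd 2 ra'" "Jd 2 rd'" "Jd 3 rb'" "Jd 3 rc'" by (rule InvE[OF assms(2)])
  define FA where "FA = f + E0 * ga + E1 * gb"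
  define FB where "FB = f' + E0 * ga' + E1 * gb'"
  define fn where "fn = f * f'"
  define gan where "gan = FA * ga' + ga * f'"
  define gbn where "gbn = FA * gb' + gb * f'"
  define tn where "tn = t * FB + f * t' - (ga * gb' - gb * ga')"
  define R11 where "R11 = \<iota> FA * ra' + ra * \<iota> FB + ra * ra' + gY ga gb * hY E0 E1 ga' gb' t' + gY ga gb * rc'
     + rb * hY E0 E1 ga' gb' t' + rb * rc'"
  define R22 where "R22 = hY E0 E1 ga gb t * gY ga' gb' + hY E0 E1 ga gb t * rb' + rc * gY ga' gb' + rc * rb'
     + \<iota> f * rd' + rd * \<iota> f' + rd * rd'"
  define R12 where "R12 = \<iota> FA * rb' + ra * gY ga' gb' + ra * rb' + gY ga gb * rd' + rb * \<iota> f' + rb * rd'"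
  define R21 where "R21 = hY E0 E1 ga gb t * ra' + rc * \<iota> FB + rc * ra' + \<iota> f * rc' + rd * hY E0 E1 ga' gb' t' + rd * rc'"
  note cs = central_swap[of ra] central_swap[of rd] central_swap[of rb] central_swap[of rc]
    central_swap[of ra'] central_swap[of rd'] central_swap[of rb'] central_swap[of rc']
    central_swap2[of ra] central_swap2[of rd] central_swap2[of rb] central_swap2[of rc]
    central_swap2[of ra'] central_swap2[of rd'] central_swap2[of rb'] central_swap2[of rc']
  have e11: "gm (mmul A B) False False = \<iota> (fn + E0 * gan + E1 * gbn) + R11"
    unfolding gm_mmul[OF A(1) B(1)] A B R11_def fn_def gan_def gbn_def FA_def FB_def
    by (simp add: gY_def hY_def sym_simps add_ac cs)
  have e22: "gm (mmul A B) True True = \<iota> fn + R22"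
    unfolding gm_mmul[OF A(1) B(1)] A B R22_def fn_def
    by (simp add: gY_def hY_def sym_simps add_ac cs)
  have e12: "gm (mmul A B) False True = gY gan gbn + R12"
    unfolding gm_mmul[OF A(1) B(1)] A B R12_def gan_def gbn_def FA_def FB_def
    by (simp add: gY_def hY_def sym_simps add_ac cs)
  have e21: "gm (mmul A B) True False = hY E0 E1 gan gbn tn + R21"
    unfolding gm_mmul[OF A(1) B(1)] A B R21_def gan_def gbn_def FA_def FB_def tn_def
    by (simp add: gY_def hY_def sym_simps add_ac cs)
  have j11: "Jd 2 R11" unfolding R11_def 
    by (intro Jd_add Jd_\<iota>l Jd_\<iota>r; ((rule Jd_mult, (rule A(6-9) B(6-9) Jd_gY Jd_hY)+, simp) | rule A(6-9) B(6-9))+)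
  have j22: "Jd 2 R22" unfolding R22_def 
    by (intro Jd_add Jd_\<iota>l Jd_\<iota>r; ((rule Jd_mult, (rule A(6-9) B(6-9) Jd_gY Jd_hY)+, simp) | rule A(6-9) B(6-9))+)
  have j12: "Jd 3 R12" unfolding R12_def 
    by (intro Jd_add Jd_\<iota>l Jd_\<iota>r; ((rule Jd_mult, (rule A(6-9) B(6-9) Jd_gY Jd_hY)+, simp) | rule A(6-9) B(6-9))+)
  have j21: "Jd 3 R21" unfolding R21_def 
    by (intro Jd_add Jd_\<iota>l Jd_\<iota>r; ((rule Jd_mult, (rule A(6-9) B(6-9) Jd_gY Jd_hY)+, simp) | rule A(6-9) B(6-9))+)
  show ?thesis
    by (rule InvI[OF Gmat_mmul[OF A(1) B(1)] e11 e22 e12 e21 j11 j22 j12 j21])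
qed


lemma Inv_genF: "A \<in> genF \<Longrightarrow> Inv A"
  by (induction rule: genF.induct) (simp_all add: Inv_mone Inv_C1 Inv_C2 Inv_add Inv_mul Inv_scal)

lemma Gmat_genC: "Gmat (genC b)" unfolding genC_def by (simp add: Gmat_C1 Gmat_C2)

lemma gm_genC: "gm (genC b) False False = \<iota> (XP (jn b))" "gm (genC b) False True = Yg (jn b)"
  "gm (genC b) True False = Yg (jn2 b)" "gm (genC b) True True = \<iota> (XP (jn2 b))"
  unfolding genC_def jn_def jn2_def by (cases b; simp add: gm_C1 gm_C2)+

lemma Jd_Yj: "Jd 1 (Yg (jn b))" "Jd 1 (Yg (jn2 b))"
  by (rule Jd_Y, simp add: jn_def jn2_def)+

definition mainZ :: "bool \<Rightarrow> 'k::comm_ring_1 Pol \<Rightarrow> 'k Pol \<Rightarrow> 'k Pol \<Rightarrow> bool \<Rightarrow> bool \<Rightarrow> 'k G" where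
  "mainZ b ga gb t i j = (if i then (if j then Dm b E0 E1 ga gb t else Cm b E0 E1 ga gb t)
      else (if j then Bm b E0 E1 ga gb t else Am b E0 E1 ga gb t))"

definition dg :: "bool \<Rightarrow> bool \<Rightarrow> nat" where "dg i j = (if i = j then 2 else 1)"

definition dg2 :: "bool \<Rightarrow> bool \<Rightarrow> nat" where "dg2 i j = (if i = j then 4 else 3)"
lemma dg2_eq: "dg2 i j = dg i j + 2" unfolding dg_def dg2_def by simp

definition ZD :: "'k::comm_ring_1 mat2 \<Rightarrow> bool \<Rightarrow> 'k Pol \<Rightarrow> 'k Pol \<Rightarrow> 'k Pol \<Rightarrow> bool" where
  "ZD Z b ga gb t \<longleftrightarrow> Gmat Z \<and> (\<forall>i j. Jd (dg2 i j) (gm Z i j - mainZ b ga gb t i j))"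

lemma Jd_Am: "Jd 2 (Am b E0 E1 ga gb t)" unfolding Am_def
  by (intro Jd_diff Jd_mult[OF Jd_gY Jd_Yj(2)] Jd_mult[OF Jd_Yj(1) Jd_hY]) simp_all
lemma Jd_Dm: "Jd 2 (Dm b E0 E1 ga gb t)" unfolding Dm_def
  by (intro Jd_diff Jd_mult[OF Jd_hY Jd_Yj(1)] Jd_mult[OF Jd_Yj(2) Jd_gY]) simp_all
lemma Jd_Bm: "Jd 1 (Bm b E0 E1 ga gb t)" unfolding Bm_def
  by (intro Jd_diff Jd_\<iota>l Jd_Yj Jd_gY)
lemma Jd_Cm: "Jd 1 (Cm b E0 E1 ga gb t)" unfolding Cm_def
  by (intro Jd_diff Jd_\<iota>l Jd_Yj Jd_hY)

lemma Jd_mainZ: "Jd (dg i j) (mainZ b ga gb t i j)"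
  unfolding mainZ_def dg_def by (cases i; cases j; simp add: Jd_Am Jd_Dm Jd_Bm[simplified] Jd_Cm[simplified])

lemma Gmat_mcomm: "Gmat A \<Longrightarrow> Gmat B \<Longrightarrow> Gmat (mcomm A B)"
  unfolding mcomm_def by (intro Gmat_madd Gmat_mmul Gmat_mscal)

lemma Z_decomp:
  assumes "Inv A" shows "\<exists>ga gb t. ZD (mcomm A (genC b)) b ga gb t"
proof -
  obtain f ga gb t ra rd rb rc where A: "Gmat A" "gm A False False = \<iota> (f + E0 * ga + E1 * gb) + ra" "gm A True True = \<iota> f + rd"
    "gm A False True = gY ga gb + rb" "gm A True False = hY E0 E1 ga gb t + rc"
    "Jd 2 ra" "Jd 2 rd" "Jd 3 rb" "Jd 3 rc" by (rule InvE[OF assms(1)])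
  define Z where "Z = mcomm A (genC b)"
  define \<rho>11 where "\<rho>11 = rb * Yg (jn2 b) - Yg (jn b) * rc"
  define \<rho>22 where "\<rho>22 = rc * Yg (jn b) - Yg (jn2 b) * rb"
  define \<rho>12 where "\<rho>12 = ra * Yg (jn b) - Yg (jn b) * rd + rb * \<iota> (XP (jn2 b)) - \<iota> (XP (jn b)) * rb"
  define \<rho>21 where "\<rho>21 = rc * \<iota> (XP (jn b)) + rd * Yg (jn2 b) - Yg (jn2 b) * ra - \<iota> (XP (jn2 b)) * rc"
  note cs = central_swap[of ra] central_swap[of rd] central_swap[of rb] central_swap[of rc]
    central_swap2[of ra] central_swap2[of rd] central_swap2[of rb] central_swap2[of rc]
  note G = A(1) Gmat_genC
  note U = gm_mcomm[OF G] gm_mmul[OF G] gm_mmul[OF Gmat_genC A(1)] A(2-5) gm_genC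
  have e11: "gm Z False False = Am b E0 E1 ga gb t + \<rho>11"
    unfolding Z_def U \<rho>11_def Am_def
    by (cases b; simp add: gY_def hY_def jn_def jn2_def sym_simps add_ac cs)
  have e22: "gm Z True True = Dm b E0 E1 ga gb t + \<rho>22"
    unfolding Z_def U \<rho>22_def Dm_def
    by (cases b; simp add: gY_def hY_def jn_def jn2_def sym_simps add_ac cs)
  have e12: "gm Z False True = Bm b E0 E1 ga gb t + \<rho>12"
    unfolding Z_def U \<rho>12_def Bm_def
    by (cases b; simp add: gY_def hY_def jn_def jn2_def ej_def E0_def E1_def sym_simps add_ac cs)
  have e21: "gm Z True False = Cm b E0 E1 ga gb t + \<rho>21"
    unfolding Z_def U \<rho>21_def Cm_def
    by (cases b; simp add: gY_def hY_def jn_def jn2_def ej_def E0_def E1_def sym_simps add_ac cs)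
  have j11: "Jd 4 \<rho>11" unfolding \<rho>11_def
    by (intro Jd_diff Jd_mult[OF A(8) Jd_Yj(2)] Jd_mult[OF Jd_Yj(1) A(9)]) simp_all
  have j22: "Jd 4 \<rho>22" unfolding \<rho>22_def
    by (intro Jd_diff Jd_mult[OF A(9) Jd_Yj(1)] Jd_mult[OF Jd_Yj(2) A(8)]) simp_all
  have j12: "Jd 3 \<rho>12" unfolding \<rho>12_def
    by (intro Jd_diff Jd_add Jd_mult[OF A(6) Jd_Yj(1)] Jd_mult[OF Jd_Yj(1) A(7)] Jd_\<iota>l Jd_\<iota>r A(8)) simp_all
  have j21: "Jd 3 \<rho>21" unfolding \<rho>21_def
    by (intro Jd_diff Jd_add Jd_mult[OF A(7) Jd_Yj(2)] Jd_mult[OF Jd_Yj(2) A(6)] Jd_\<iota>l Jd_\<iota>r A(9)) simp_all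
  have "ZD Z b ga gb t"
    unfolding ZD_def
  proof (intro conjI allI)
    show "Gmat Z" unfolding Z_def by (intro Gmat_mcomm G)
    fix i j
    show "Jd (dg2 i j) (gm Z i j - mainZ b ga gb t i j)"
      by (cases i; cases j) (simp_all only: mainZ_def dg2_def e11 e22 e12 e21 j11 j22 j12 j21 if_True if_False simp_thms add_diff_cancel_left')
  qed
  then show ?thesis unfolding Z_def by blast
qed


lemma ZD_rem: "ZD Z b ga gb t \<Longrightarrow> Jd (dg i j + 2) (gm Z i j - mainZ b ga gb t i j)"
  unfolding ZD_def dg2_eq by blast
lemma ZD_Gmat: "ZD Z b ga gb t \<Longrightarrow> Gmat Z"
  unfolding ZD_def by blast
lemma dg_ge: "1 \<le> dg i j" unfolding dg_def by simp

lemma trip':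
  assumes "Jd a x0" "Jd (a + 2) (x - x0)" "Jd b y0" "Jd (b + 2) (y - y0)" "Jd c z0" "Jd (c + 2) (z - z0)" "3 \<le> a + b + c"
  shows "x * (y * z) = x0 * (y0 * z0)"
  using trip[OF assms] by (simp add: mult.assoc)

lemma ZZZ:
  assumes "ZD Z1 b1 a1 c1 t1" "ZD Z2 b2 a2 c2 t2" "ZD Z3 b3 a3 c3 t3"
  shows "gm Z1 i j * (gm Z2 k l * gm Z3 m n) = mainZ b1 a1 c1 t1 i j * (mainZ b2 a2 c2 t2 k l * mainZ b3 a3 c3 t3 m n)"
  by (rule trip'[OF Jd_mainZ ZD_rem[OF assms(1)] Jd_mainZ ZD_rem[OF assms(2)] Jd_mainZ ZD_rem[OF assms(3)]])
     (use dg_ge[of i j] dg_ge[of k l] dg_ge[of m n] in simp)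

lemma ZZY:
  assumes "ZD Z1 b1 a1 c1 t1" "ZD Z2 b2 a2 c2 t2" "q \<le> 3"
  shows "gm Z1 i j * (gm Z2 k l * Yg q) = mainZ b1 a1 c1 t1 i j * (mainZ b2 a2 c2 t2 k l * Yg q)"
  by (rule trip'[OF Jd_mainZ ZD_rem[OF assms(1)] Jd_mainZ ZD_rem[OF assms(2)] Jd_Y[OF assms(3)]])
     (use dg_ge[of i j] dg_ge[of k l] in simp_all)

lemma YZZ:
  assumes "ZD Z1 b1 a1 c1 t1" "ZD Z2 b2 a2 c2 t2" "q \<le> 3"
  shows "Yg q * (gm Z1 i j * gm Z2 k l) = Yg q * (mainZ b1 a1 c1 t1 i j * mainZ b2 a2 c2 t2 k l)"
  by (rule trip'[OF Jd_Y[OF assms(3)] _ Jd_mainZ ZD_rem[OF assms(1)] Jd_mainZ ZD_rem[OF assms(2)]])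
     (use dg_ge[of i j] dg_ge[of k l] in simp_all)

lemma XZZ:
  assumes "ZD Z1 b1 a1 c1 t1" "ZD Z2 b2 a2 c2 t2" "3 \<le> dg i j + dg k l"
  shows "\<iota> p * (gm Z1 i j * gm Z2 k l) = \<iota> p * (mainZ b1 a1 c1 t1 i j * mainZ b2 a2 c2 t2 k l)"
  by (rule trip'[OF Jd_\<iota> _ Jd_mainZ ZD_rem[OF assms(1)] Jd_mainZ ZD_rem[OF assms(2)]])
     (use assms(3) in simp_all)

lemma gm_central: "gm Z i j * \<iota> p = \<iota> p * gm Z i j" by (rule central_swap)
lemma gm_central2: "gm Z i j * (\<iota> p * w) = \<iota> p * (gm Z i j * w)" by (rule central_swap2)

lemma jn_le[simp]: "jn b \<le> 3" "jn2 b \<le> 3" unfolding jn_def jn2_def by simp_all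

lemma dg_simps: "dg False False = 2" "dg True True = 2" "dg False True = 1" "dg True False = 1"
  unfolding dg_def by simp_all

lemma triple_zero:
  assumes Z1: "ZD Z1 b1 a1 c1 t1" and Z2: "ZD Z2 b2 a2 c2 t2" and Z3: "ZD Z3 b3 a3 c3 t3"
  shows "gm (mmul (mmul Z1 Z2) Z3) i j = 0"
proof -
  note G = ZD_Gmat[OF Z1] ZD_Gmat[OF Z2] ZD_Gmat[OF Z3]
  show ?thesis
    unfolding gm_mmul[OF Gmat_mmul[OF G(1,2)] G(3)] gm_mmul[OF G(1,2)]
    apply (simp only: distrib_left distrib_right mult.assoc ZZZ[OF Z1 Z2 Z3])
    apply (cases b1; cases b2; cases b3; cases i; cases j; simp add: mainZ_def Zdefs sym_simps)
    done
qed

lemma pair_comm: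
  assumes Z1: "ZD Z1 b1 a1 c1 t1" and Z2: "ZD Z2 b2 a2 c2 t2"
  shows "gm (mmul (mmul Z1 Z2) (genC k)) i j = gm (mmul (genC k) (mmul Z1 Z2)) i j"
proof -
  note G = ZD_Gmat[OF Z1] ZD_Gmat[OF Z2]
  note G12 = Gmat_mmul[OF G(1,2)]
  show ?thesis
    unfolding gm_mmul[OF G12 Gmat_genC] gm_mmul[OF Gmat_genC G12] gm_mmul[OF G(1,2)]
    apply (cases i; cases j)
    apply (simp_all only: gm_genC distrib_left distrib_right mult.assoc gm_central gm_central2)
    apply (simp_all add: ZZY[OF Z1 Z2] YZZ[OF Z1 Z2] XZZ[OF Z1 Z2] dg_simps)
    apply (cases b1; cases b2; cases k;
           simp add: mainZ_def Zdefs sym_simps add_ac E0_def E1_def)+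
    done
qed


definition mz :: "'k::comm_ring_1 mat2" where "mz = (\<lambda>i j. sc_zero)"

lemma Gmat_mz: "Gmat mz" unfolding Gmat_def mz_def by (simp add: Gset_zero)
lemma gm_mz: "gm mz i j = 0" unfolding gm_def mz_def by (metis RG_inverse zero_G.rep_eq)

lemma mmul_assoc: "Gmat A \<Longrightarrow> Gmat B \<Longrightarrow> Gmat C \<Longrightarrow> mmul (mmul A B) C = mmul A (mmul B C)"
  by (rule Gmat_eqI) (simp_all add: Gmat_mmul gm_mmul algebra_simps)

lemma mmul_madd_l: "Gmat A \<Longrightarrow> Gmat B \<Longrightarrow> Gmat C \<Longrightarrow> mmul (madd A B) C = madd (mmul A C) (mmul B C)"
  by (rule Gmat_eqI) (simp_all add: Gmat_mmul Gmat_madd gm_mmul gm_madd algebra_simps)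

lemma mmul_madd_r: "Gmat A \<Longrightarrow> Gmat B \<Longrightarrow> Gmat C \<Longrightarrow> mmul C (madd A B) = madd (mmul C A) (mmul C B)"
  by (rule Gmat_eqI) (simp_all add: Gmat_mmul Gmat_madd gm_mmul gm_madd algebra_simps)

lemma mmul_mone_l: "Gmat A \<Longrightarrow> mmul mone A = A"
  by (rule Gmat_eqI) (simp_all add: Gmat_mmul Gmat_mone gm_mmul gm_mone)

lemma mmul_mone_r: "Gmat A \<Longrightarrow> mmul A mone = A"
  by (rule Gmat_eqI) (simp_all add: Gmat_mmul Gmat_mone gm_mmul gm_mone)

lemma mmul_mscal_l: "Gmat A \<Longrightarrow> Gmat B \<Longrightarrow> mmul (mscal c A) B = mscal c (mmul A B)"
  by (rule Gmat_eqI) (simp_all add: Gmat_mmul Gmat_mscal gm_mmul gm_mscal algebra_simps)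

lemma mmul_mscal_r: "Gmat A \<Longrightarrow> Gmat B \<Longrightarrow> mmul A (mscal c B) = mscal c (mmul A B)"
  by (rule Gmat_eqI) (simp_all add: Gmat_mmul Gmat_mscal gm_mmul gm_mscal algebra_simps gm_central gm_central2)

lemma madd_mz: "Gmat A \<Longrightarrow> madd A mz = A"
  by (rule Gmat_eqI) (simp_all add: Gmat_madd Gmat_mz gm_madd gm_mz)

lemma mmul_split: "Gmat A \<Longrightarrow> Gmat C \<Longrightarrow> mmul A C = madd (mmul C A) (mcomm A C)"
  by (rule Gmat_eqI) (simp_all add: Gmat_mmul Gmat_madd Gmat_mcomm gm_mmul gm_madd gm_mcomm)

lemma comm_gen:
  assumes Q: "Gmat Q" and gen: "\<And>k. mmul Q (genC k) = mmul (genC k) Q" and d: "d \<in> genF"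
  shows "mmul Q d = mmul d Q"
  using d
proof (induction rule: genF.induct)
  case one then show ?case using Q by (simp add: mmul_mone_l mmul_mone_r)
next
  case c1 then show ?case using gen[of False] by (simp add: genC_def)
next
  case c2 then show ?case using gen[of True] by (simp add: genC_def)
next
  case (add A B)
  then show ?case using Q by (simp add: mmul_madd_l mmul_madd_r Gmat_genF)
next
  case (mul A B)
  have GA: "Gmat A" and GB: "Gmat B" using mul by (simp_all add: Gmat_genF)
  have "mmul Q (mmul A B) = mmul (mmul Q A) B" using Q GA GB by (simp add: mmul_assoc)
  also have "\<dots> = mmul (mmul A Q) B" using mul by simp
  also have "\<dots> = mmul A (mmul Q B)" using Q GA GB by (simp add: mmul_assoc)
  also have "\<dots> = mmul A (mmul B Q)" using mul by simp
  also have "\<dots> = mmul (mmul A B) Q" using Q GA GB by (simp add: mmul_assoc)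
  finally show ?case .
next
  case (scal A c)
  then show ?case using Q by (simp add: mmul_mscal_l mmul_mscal_r Gmat_genF)
qed

lemma genC_genF: "genC b \<in> genF" unfolding genC_def by (simp add: genF.c1 genF.c2)

lemma mcomm_genF: "A \<in> genF \<Longrightarrow> B \<in> genF \<Longrightarrow> mcomm A B \<in> genF"
  unfolding mcomm_def by (intro genF.add genF.mul genF.scal)

lemma foldl_genF: "A \<in> genF \<Longrightarrow> foldl (\<lambda>acc j. mcomm acc (genC j)) A xs \<in> genF"
  by (induction xs arbitrary: A) (simp_all add: mcomm_genF genC_genF)

lemma lncomm_shape:
  assumes "length u \<ge> 2"
  shows "\<exists>V c. V \<in> genF \<and> lncomm u = mcomm V (genC c)"
proof -
  obtain i js where u: "u = i # js" using assms by (cases u) auto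
  then have ne: "js \<noteq> []" using assms by auto
  define st where "st = (\<lambda>acc j. mcomm acc (genC j) :: 'a mat2)"
  have "lncomm u = foldl st (genC i) js" unfolding u st_def by simp
  also have "\<dots> = foldl st (genC i) (butlast js @ [last js])" using ne by simp
  also have "\<dots> = mcomm (foldl st (genC i) (butlast js)) (genC (last js))" unfolding st_def by simp
  finally have "lncomm u = mcomm (foldl st (genC i) (butlast js)) (genC (last js))" .
  moreover have "foldl st (genC i) (butlast js) \<in> genF" unfolding st_def by (rule foldl_genF[OF genC_genF])
  ultimately show ?thesis by blast
qed


theorem lemma7:
  fixes u1 u2 :: "bool list"
  assumes "infinite (UNIV :: 'k::field set)"
    and "CHAR('k) \<noteq> 2"
    and "length u1 \<ge> 2" and "length u2 \<ge> 2"
  shows "strongly_central (mmul (lncomm u1 :: 'k mat2) (lncomm u2))"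
proof -
  obtain V1 c1 where V1: "V1 \<in> genF" and U1: "(lncomm u1 :: 'k mat2) = mcomm V1 (genC c1)"
    using lncomm_shape[OF assms(3)] by blast
  obtain V2 c2 where V2: "V2 \<in> genF" and U2: "(lncomm u2 :: 'k mat2) = mcomm V2 (genC c2)"
    using lncomm_shape[OF assms(4)] by blast
  define P where "P = mmul (lncomm u1 :: 'k mat2) (lncomm u2)"
  obtain a1 b1 t1 where Z1: "ZD (lncomm u1 :: 'k mat2) c1 a1 b1 t1"
    using Z_decomp[OF Inv_genF[OF V1], of c1] U1 by auto
  obtain a2 b2 t2 where Z2: "ZD (lncomm u2 :: 'k mat2) c2 a2 b2 t2"
    using Z_decomp[OF Inv_genF[OF V2], of c2] U2 by auto
  have U1F: "(lncomm u1 :: 'k mat2) \<in> genF" using U1 V1 by (simp add: mcomm_genF genC_genF)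
  have U2F: "(lncomm u2 :: 'k mat2) \<in> genF" using U2 V2 by (simp add: mcomm_genF genC_genF)
  have PF: "P \<in> genF" unfolding P_def using U1F U2F by (rule genF.mul)
  have GP: "Gmat P" using PF by (rule Gmat_genF)
  have Pgen: "mmul P (genC k) = mmul (genC k) P" for k
    unfolding P_def
    by (rule Gmat_eqI) (simp_all add: Gmat_mmul Gmat_genC ZD_Gmat[OF Z1] ZD_Gmat[OF Z2] pair_comm[OF Z1 Z2])
  have Pcent: "mmul P d = mmul d P" if "d \<in> genF" for d
    by (rule comm_gen[OF GP Pgen that])
  have PX: "mmul P (mcomm b (genC k)) = mz" if bF: "b \<in> genF" for b k
  proof -
    obtain a3 b3 t3 where Z3: "ZD (mcomm b (genC k)) k a3 b3 t3"
      using Z_decomp[OF Inv_genF[OF bF], of k] by auto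
    show ?thesis unfolding P_def
      by (rule Gmat_eqI) (simp_all add: Gmat_mmul Gmat_mz gm_mz ZD_Gmat[OF Z1] ZD_Gmat[OF Z2] ZD_Gmat[OF Z3]
          triple_zero[OF Z1 Z2 Z3])
  qed
  have strong: "central_in_F (mmul P b)" if b: "b \<in> genF" for b
  proof -
    have Gb: "Gmat b" using b by (rule Gmat_genF)
    have QF: "mmul P b \<in> genF" using PF b by (rule genF.mul)
    have Qgen: "mmul (mmul P b) (genC k) = mmul (genC k) (mmul P b)" for k
    proof -
      note GC = Gmat_genC[of k]
      have GX: "Gmat (mcomm b (genC k))" by (rule Gmat_mcomm[OF Gb GC])
      have "mmul (mmul P b) (genC k) = mmul P (mmul b (genC k))" by (rule mmul_assoc[OF GP Gb GC])
      also have "\<dots> = mmul P (madd (mmul (genC k) b) (mcomm b (genC k)))" by (simp add: mmul_split[OF Gb GC])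
      also have "\<dots> = madd (mmul P (mmul (genC k) b)) (mmul P (mcomm b (genC k)))"
        by (rule mmul_madd_r[OF Gmat_mmul[OF GC Gb] GX GP])
      also have "\<dots> = madd (mmul P (mmul (genC k) b)) mz" by (simp add: PX[OF b])
      also have "\<dots> = mmul P (mmul (genC k) b)" by (rule madd_mz[OF Gmat_mmul[OF GP Gmat_mmul[OF GC Gb]]])
      also have "\<dots> = mmul (mmul P (genC k)) b" by (rule mmul_assoc[OF GP GC Gb, symmetric])
      also have "\<dots> = mmul (mmul (genC k) P) b" by (simp add: Pgen)
      also have "\<dots> = mmul (genC k) (mmul P b)" by (rule mmul_assoc[OF GC GP Gb])
      finally show ?thesis .
    qed
    have "mmul (mmul P b) d = mmul d (mmul P b)" if "d \<in> genF" for d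
      by (rule comm_gen[OF Gmat_genF[OF QF] Qgen that])
    then show ?thesis unfolding central_in_F_def using QF by blast
  qed
  have "central_in_F P" unfolding central_in_F_def using PF Pcent by blast
  then show ?thesis unfolding strongly_central_def P_def[symmetric] using strong by blast
qed


end
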